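(* There is a constant $c>0$ such that for every $n\ge1$, with $N=2^n$, there is a quantum circuit on $n+1$ qubits (one of them an ancilla qubit; plus possibly a constant number of further scratch qubits starting and ending in $|0\rangle$) consisting of at most $c\,n^2$ elementary gates which maps $|0\rangle\otimes v\mapsto|0\rangle\otimes A_N v$ for every $v\in\mathbb{C}^N$. That is, the discrete Hartley transform $A_N$ can be computed with $O(\log^2N)$ elementary operations using one additional ancilla qubit.
   Context: Qubit/basis conventions: the state space of $m$ qubits is $\mathbb{C}^{2^m}$ with computational basis $|x\rangle$ for bit strings $x$ read as binary integers. Elementary gates: (i) a CNOT between any two qubits, and (ii) any single-qubit gate $I_{2^{m-t}}\otimes U\otimes I_{2^{t-1}}$ with $U\in\mathcal U(2)$ arbitrary. The discrete Hartley transform is $A_N=\frac1{\sqrt N}[\mathrm{cas}(2\pi jk/N)]_{j,k=0,\dots,N-1}$ with $\mathrm{cas}(t)=\cos t+\sin t$. *)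

theory Defs
  imports Complex_Main "Jordan_Normal_Form.Matrix"
begin

definition kron :: "complex mat \<Rightarrow> complex mat \<Rightarrow> complex mat" where
  "kron A B = mat (dim_row A * dim_row B) (dim_col A * dim_col B)
     (\<lambda>(i,j). A $$ (i div dim_row B, j div dim_col B) * B $$ (i mod dim_row B, j mod dim_col B))"

definition adj :: "complex mat \<Rightarrow> complex mat" where
  "adj A = mat (dim_col A) (dim_row A) (\<lambda>(i,j). cnj (A $$ (j,i)))"

definition unitary2 :: "complex mat \<Rightarrow> bool" where
  "unitary2 U \<longleftrightarrow> U \<in> carrier_mat 2 2 \<and> U * adj U = 1\<^sub>m 2"

definition bitv :: "nat \<Rightarrow> nat \<Rightarrow> nat" where
  "bitv x b = (x div 2 ^ b) mod 2"

definition single_gate :: "nat \<Rightarrow> nat \<Rightarrow> complex mat \<Rightarrow> complex mat" where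
  "single_gate m t U = kron (kron (1\<^sub>m (2 ^ (m - t))) U) (1\<^sub>m (2 ^ (t - 1)))"

(* CNOT on m qubits with control qubit c and target qubit g (qubit t = bit t-1):
   |x> \<mapsto> |x XOR (bit_c(x) * 2^(g-1))> *)
definition cnot_map :: "nat \<Rightarrow> nat \<Rightarrow> nat \<Rightarrow> nat" where
  "cnot_map c g x = (if bitv x (c - 1) = 1
       then (if bitv x (g - 1) = 1 then x - 2 ^ (g - 1) else x + 2 ^ (g - 1)) else x)"

definition cnot_gate :: "nat \<Rightarrow> nat \<Rightarrow> nat \<Rightarrow> complex mat" where
  "cnot_gate m c g = mat (2 ^ m) (2 ^ m) (\<lambda>(r,s). if r = cnot_map c g s then 1 else 0)"

definition elementary_gate :: "nat \<Rightarrow> complex mat \<Rightarrow> bool" where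
  "elementary_gate m G \<longleftrightarrow>
     (\<exists>c g. 1 \<le> c \<and> c \<le> m \<and> 1 \<le> g \<and> g \<le> m \<and> c \<noteq> g \<and> G = cnot_gate m c g) \<or>
     (\<exists>t U. 1 \<le> t \<and> t \<le> m \<and> unitary2 U \<and> G = single_gate m t U)"

(* matrix of a circuit: gates applied in list order, first gate first *)
definition circuit_mat :: "nat \<Rightarrow> complex mat list \<Rightarrow> complex mat" where
  "circuit_mat m gs = foldl (\<lambda>M G. G * M) (1\<^sub>m (2 ^ m)) gs"

definition hartley :: "nat \<Rightarrow> complex mat" where
  "hartley N = mat N N (\<lambda>(j,k). complex_of_real
      ((cos (2 * pi * real j * real k / real N) + sin (2 * pi * real j * real k / real N)) / sqrt (real N)))"

(* |0...0> \<otimes> v in C^(2^m) for v in C^N, N = 2^n \<le> 2^m: zero padding in high-order qubits *)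
definition embed :: "nat \<Rightarrow> complex vec \<Rightarrow> complex vec" where
  "embed m v = vec (2 ^ m) (\<lambda>i. if i < dim_vec v then v $ i else 0)"

end

theory Submission
  imports Defs
begin

definition run :: "complex mat list \<Rightarrow> complex vec \<Rightarrow> complex vec" where
  "run gs w = foldl (\<lambda>w G. G *\<^sub>v w) w gs"

lemma run_append[simp]: "run (gs1 @ gs2) w = run gs2 (run gs1 w)"
  by (simp add: run_def)

lemma run_Nil[simp]: "run [] w = w" by (simp add: run_def)
lemma run_Cons[simp]: "run (G # gs) w = run gs (G *\<^sub>v w)" by (simp add: run_def)

lemma foldl_circ:
  assumes "\<forall>G\<in>set gs. G \<in> carrier_mat D D" "M0 \<in> carrier_mat D D" "w \<in> carrier_vec D"
  shows "foldl (\<lambda>M G. G * M) M0 gs *\<^sub>v w = foldl (\<lambda>w G. G *\<^sub>v w) (M0 *\<^sub>v w) gs"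
  using assms
proof (induction gs arbitrary: M0)
  case Nil then show ?case by simp
next
  case (Cons G gs)
  have G: "G \<in> carrier_mat D D" using Cons by simp
  have "foldl (\<lambda>M G. G * M) (G * M0) gs *\<^sub>v w = foldl (\<lambda>w G. G *\<^sub>v w) ((G * M0) *\<^sub>v w) gs"
    using Cons G by (intro Cons.IH) auto
  also have "(G * M0) *\<^sub>v w = G *\<^sub>v (M0 *\<^sub>v w)" using G Cons by (auto intro: assoc_mult_mat_vec)
  finally show ?case by simp
qed

lemma circuit_run:
  assumes "\<forall>G\<in>set gs. G \<in> carrier_mat (2^m) (2^m)" "w \<in> carrier_vec (2^m)"
  shows "circuit_mat m gs *\<^sub>v w = run gs w"
  unfolding circuit_mat_def run_def
  using foldl_circ[OF assms(1) _ assms(2), of "1\<^sub>m (2^m)"] assms by simp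

lemma idx_decomp:
  fixes j b :: nat
  shows "j = j div (2*b) * (2*b) + (j div b mod 2) * b + j mod b"
proof -
  have "j = j div b * b + j mod b" by simp
  moreover have "j div b = j div b div 2 * 2 + j div b mod 2" by simp
  moreover have "j div b div 2 = j div (2*b)" by (simp add: div_mult2_eq mult.commute)
  ultimately have "j = (j div (2*b) * 2 + j div b mod 2) * b + j mod b" by simp
  then show ?thesis by (simp add: algebra_simps)
qed

lemma single_gate_carrier:
  assumes "q < m" "U \<in> carrier_mat 2 2"
  shows "single_gate m (Suc q) U \<in> carrier_mat (2^m) (2^m)"
proof -
  have e: "2 ^ (m - Suc q) * 2 * 2 ^ q = (2::nat) ^ m"
  proof -
    have "(2::nat) ^ (m - Suc q) * 2 * 2 ^ q = 2 ^ (m - Suc q + 1 + q)" by (simp add: power_add)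
    also have "m - Suc q + 1 + q = m" using assms(1) by simp
    finally show ?thesis .
  qed
  show ?thesis using assms e unfolding single_gate_def kron_def by auto
qed

lemma single_gate_entry:
  assumes "q < m" "U \<in> carrier_mat 2 2" "i < 2^m" "j < 2^m"
  shows "single_gate m (Suc q) U $$ (i,j) =
    (if i div (2*2^q) = j div (2*2^q) \<and> i mod 2^q = j mod 2^q
     then U $$ (i div 2^q mod 2, j div 2^q mod 2) else 0)"
proof -
  let ?a = "2 ^ (m - Suc q) :: nat" and ?b = "2^q :: nat"
  have e: "?a * 2 * ?b = 2 ^ m"
  proof -
    have "(2::nat) ^ (m - Suc q) * 2 * 2 ^ q = 2 ^ (m - Suc q + 1 + q)" by (simp add: power_add)
    also have "m - Suc q + 1 + q = m" using assms(1) by simp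
    finally show ?thesis .
  qed
  have ib: "i div ?b < ?a * 2" "j div ?b < ?a * 2"
    using assms e by (simp_all add: less_mult_imp_div_less)
  have ib2: "i div ?b div 2 < ?a" "j div ?b div 2 < ?a" using ib by auto
  have d: "i div ?b div 2 = i div (2 * ?b)" "j div ?b div 2 = j div (2 * ?b)"
    by (subst mult.commute, rule div_mult2_eq[symmetric])+
  show ?thesis
    using assms e ib ib2
    unfolding single_gate_def kron_def
    by (auto simp: d)
qed

lemma hr_facts:
  fixes h r b :: nat
  assumes "r < 2*b"
  shows "(h*(2*b) + r) div (2*b) = h" "(h*(2*b)+r) mod b = r mod b" "(h*(2*b)+r) div b mod 2 = r div b"
proof -
  have b: "b > 0" using assms by simp
  show "(h*(2*b) + r) div (2*b) = h" using assms by simp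
  have "h*(2*b)+r = r + (2*h)*b" by simp
  then show "(h*(2*b)+r) mod b = r mod b" by (metis mod_mult_self1)
  have "(h*(2*b)+r) div b = r div b + 2*h" using b by (simp add: \<open>h*(2*b)+r = r + (2*h)*b\<close>)
  moreover have "r div b < 2" using assms by (simp add: div_less_iff_less_mult mult.commute)
  ultimately show "(h*(2*b)+r) div b mod 2 = r div b" by simp
qed

lemma single_gate_apply:
  assumes "q < m" "U \<in> carrier_mat 2 2"
  shows "single_gate m (Suc q) U *\<^sub>v vec (2^m) f = vec (2^m) (\<lambda>x.
     U $$ (x div 2^q mod 2, 0) * f (x div (2*2^q) * (2*2^q) + x mod 2^q) +
     U $$ (x div 2^q mod 2, 1) * f (x div (2*2^q) * (2*2^q) + (2^q + x mod 2^q)))"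
proof (rule eq_vecI)
  have C: "single_gate m (Suc q) U \<in> carrier_mat (2^m) (2^m)" using single_gate_carrier assms by blast
  then show "dim_vec (single_gate m (Suc q) U *\<^sub>v vec (2 ^ m) f) = dim_vec (vec (2^m) (\<lambda>x.
     U $$ (x div 2^q mod 2, 0) * f (x div (2*2^q) * (2*2^q) + x mod 2^q) +
     U $$ (x div 2^q mod 2, 1) * f (x div (2*2^q) * (2*2^q) + (2^q + x mod 2^q))))" by simp
  fix x assume x: "x < dim_vec (vec (2^m) (\<lambda>x.
     U $$ (x div 2^q mod 2, 0) * f (x div (2*2^q) * (2*2^q) + x mod 2^q) +
     U $$ (x div 2^q mod 2, 1) * f (x div (2*2^q) * (2*2^q) + (2^q + x mod 2^q))))"
  then have x: "x < 2^m" by simp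
  define b :: nat where "b = 2^q"
  define B :: nat where "B = 2*b"
  have b0: "b > 0" by (simp add: b_def)
  define x0 where "x0 = x div B * B + x mod b"
  define x1 where "x1 = x div B * B + (b + x mod b)"
  have xmb: "x mod b < b" using b0 by simp
  have f0: "x0 div B = x div B" "x0 mod b = x mod b" "x0 div b mod 2 = 0"
    using hr_facts[of "x mod b" b "x div B"] xmb unfolding x0_def B_def by auto
  have f1: "x1 div B = x div B" "x1 mod b = x mod b" "x1 div b mod 2 = 1"
    using hr_facts[of "b + x mod b" b "x div B"] xmb b0 unfolding x1_def B_def by auto
  have mB: "2^m = (2^m div B) * B" unfolding B_def b_def using assms(1)
    by (metis dvd_div_mult_self le_imp_power_dvd power_Suc Suc_leI)
  have xB: "x div B < 2^m div B" using x mB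
    by (metis div_less_iff_less_mult B_def b0 mult_pos_pos zero_less_numeral)
  have "x1 < (x div B + 1) * B" unfolding x1_def B_def using xmb by simp
  also have "\<dots> \<le> (2^m div B) * B" using xB by (intro mult_le_mono1) simp
  finally have x1lt: "x1 < 2^m" using mB by simp
  have x0lt: "x0 < 2^m" using x1lt unfolding x0_def x1_def by simp
  have x01: "x0 \<noteq> x1" unfolding x0_def x1_def using b0 by simp
  let ?E = "\<lambda>j. single_gate m (Suc q) U $$ (x, j)"
  have Ej: "?E j = (if x div B = j div B \<and> x mod b = j mod b then U $$ (x div b mod 2, j div b mod 2) else 0)"
    if "j < 2^m" for j
    using single_gate_entry[OF assms x that] unfolding B_def b_def by simp
  have "(single_gate m (Suc q) U *\<^sub>v vec (2 ^ m) f) $ x = (\<Sum>j\<in>{0..<2^m}. ?E j * f j)"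
    using C x by (simp add: scalar_prod_def)
  also have "\<dots> = (\<Sum>j\<in>{x0,x1}. ?E j * f j)"
  proof (rule sum.mono_neutral_right)
    show "finite {0..<(2::nat)^m}" by simp
    show "{x0, x1} \<subseteq> {0..<2^m}" using x0lt x1lt by auto
    show "\<forall>j\<in>{0..<2^m} - {x0, x1}. ?E j * f j = 0"
    proof
      fix j assume j: "j \<in> {0..<2^m} - {x0, x1}"
      have "\<not> (x div B = j div B \<and> x mod b = j mod b)"
      proof
        assume c: "x div B = j div B \<and> x mod b = j mod b"
        have "j = j div B * B + (j div b mod 2) * b + j mod b" using idx_decomp[of j b] unfolding B_def .
        moreover have "j div b mod 2 = 0 \<or> j div b mod 2 = 1" by auto
        ultimately have "j = x0 \<or> j = x1" using c unfolding x0_def x1_def by auto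
        then show False using j by auto
      qed
      then have "?E j = 0" using Ej[of j] j by auto
      then show "?E j * f j = 0" by simp
    qed
  qed
  also have "\<dots> = ?E x0 * f x0 + ?E x1 * f x1" using x01 by simp
  also have "\<dots> = U $$ (x div b mod 2, 0) * f x0 + U $$ (x div b mod 2, 1) * f x1"
    using Ej[OF x0lt] Ej[OF x1lt] f0 f1 by simp
  finally show "(single_gate m (Suc q) U *\<^sub>v vec (2 ^ m) f) $ x = vec (2^m) (\<lambda>x.
     U $$ (x div 2^q mod 2, 0) * f (x div (2*2^q) * (2*2^q) + x mod 2^q) +
     U $$ (x div 2^q mod 2, 1) * f (x div (2*2^q) * (2*2^q) + (2^q + x mod 2^q))) $ x"
    using x unfolding x0_def x1_def B_def b_def by simp
qed

lemma bitv_bit: "bitv x b = (if bit x b then 1 else 0)"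
  unfolding bitv_def by (simp add: bit_iff_odd odd_iff_mod_2_eq_one)

lemma lt_pow_bits: "(x::nat) < 2^m \<longleftrightarrow> (\<forall>i\<ge>m. \<not> bit x i)"
proof -
  have "x < 2^m \<longleftrightarrow> take_bit m x = x" by (simp add: take_bit_nat_eq_self_iff)
  also have "\<dots> \<longleftrightarrow> (\<forall>i. bit (take_bit m x) i = bit x i)" by (simp add: bit_eq_iff)
  also have "\<dots> \<longleftrightarrow> (\<forall>i\<ge>m. \<not> bit x i)" apply (simp add: bit_take_bit_iff) by (meson leI linorder_not_le)
  finally show ?thesis .
qed

lemma nat_add_pow_bit:
  assumes "\<not> bit (x::nat) q"
  shows "bit (x + 2^q) i \<longleftrightarrow> i = q \<or> bit x i"
proof -
  have d: "\<And>i. \<not> bit x i \<or> \<not> bit ((2::nat)^q) i" using assms by (auto simp: bit_exp_iff)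
  show ?thesis using bit_disjunctive_add_iff[OF d, of i] by (auto simp: bit_exp_iff)
qed

lemma nat_unset_add: assumes "bit (x::nat) q" shows "unset_bit q x + 2^q = x"
proof (rule bit_eqI)
  fix i
  have "\<not> bit (unset_bit q x) q" by (simp add: bit_unset_bit_iff)
  then show "bit (unset_bit q x + 2^q) i = bit x i"
    using nat_add_pow_bit[of "unset_bit q x" q i] assms by (auto simp: bit_unset_bit_iff)
qed

lemma cnot_bits: "cnot_map c g x = (if bit x (c-1) then flip_bit (g-1) x else x)"
proof -
  have a: "x - 2^(g-1) = flip_bit (g-1) x" if "bit x (g-1)"
    using nat_unset_add[OF that] that by (simp add: flip_bit_eq_if)
  have b: "x + 2^(g-1) = flip_bit (g-1) x" if "\<not> bit x (g-1)"
    using that by (auto intro!: bit_eqI simp: nat_add_pow_bit bit_flip_bit_iff)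
  show ?thesis unfolding cnot_map_def bitv_bit using a b by auto
qed

lemma cnot_invol:
  assumes "c \<noteq> g" "1 \<le> c" "1 \<le> g"
  shows "cnot_map c g (cnot_map c g x) = x"
proof -
  have "c - 1 \<noteq> g - 1" using assms by simp
  then show ?thesis unfolding cnot_bits by (auto simp: bit_flip_bit_iff intro!: bit_eqI)
qed

lemma cnot_lt:
  assumes "g \<le> m" "1 \<le> g" "x < 2^m"
  shows "cnot_map c g x < 2^m"
  using assms unfolding cnot_bits lt_pow_bits by (auto simp: bit_flip_bit_iff)

lemma cnot_apply:
  assumes "1 \<le> c" "c \<le> m" "1 \<le> g" "g \<le> m" "c \<noteq> g"
  shows "cnot_gate m c g *\<^sub>v vec (2^m) f = vec (2^m) (\<lambda>x. f (cnot_map c g x))"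
proof (rule eq_vecI)
  show "dim_vec (cnot_gate m c g *\<^sub>v vec (2^m) f) = dim_vec (vec (2^m) (\<lambda>x. f (cnot_map c g x)))"
    by (simp add: cnot_gate_def)
  fix x assume "x < dim_vec (vec (2^m) (\<lambda>x. f (cnot_map c g x)))"
  then have x: "x < 2^m" by simp
  have y: "cnot_map c g x < 2^m" using cnot_lt assms x by blast
  have "(cnot_gate m c g *\<^sub>v vec (2^m) f) $ x = (\<Sum>j\<in>{0..<2^m}. (if x = cnot_map c g j then 1 else 0) * f j)"
    using x by (simp add: cnot_gate_def scalar_prod_def)
  also have "\<dots> = (\<Sum>j\<in>{0..<2^m}. (if j = cnot_map c g x then f j else 0))"
    using cnot_invol[OF assms(5,1,3)] by (intro sum.cong) auto
  also have "\<dots> = f (cnot_map c g x)" using y by simp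
  finally show "(cnot_gate m c g *\<^sub>v vec (2^m) f) $ x = vec (2^m) (\<lambda>x. f (cnot_map c g x)) $ x"
    using x by simp
qed

lemma cnot_carrier: "cnot_gate m c g \<in> carrier_mat (2^m) (2^m)"
  by (simp add: cnot_gate_def)


definition hmat :: "complex mat" where
  "hmat = mat 2 2 (\<lambda>(i,j). if i = 1 \<and> j = 1 then - complex_of_real (1 / sqrt 2) else complex_of_real (1 / sqrt 2))"

definition rmat :: "real \<Rightarrow> complex mat" where
  "rmat \<phi> = mat 2 2 (\<lambda>(i,j). if i = j then (if i = 0 then 1 else cis \<phi>) else 0)"

lemma lt2: "(i::nat) < 2 \<Longrightarrow> i = 0 \<or> i = 1" by auto

lemma sum2: "(\<Sum>k\<in>{0..<2::nat}. g k) = g 0 + g 1"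
  by (simp add: numeral_2_eq_2)

lemma hmat_carrier: "hmat \<in> carrier_mat 2 2" by (simp add: hmat_def)
lemma rmat_carrier: "rmat \<phi> \<in> carrier_mat 2 2" by (simp add: rmat_def)

lemma unitary_hmat: "unitary2 hmat"
  unfolding unitary2_def
proof (intro conjI hmat_carrier eq_matI)
  fix i j assume "i < dim_row (1\<^sub>m 2)" "j < dim_col (1\<^sub>m (2::nat))"
  then have ij: "i < 2" "j < 2" by auto
  have s: "complex_of_real (1 / sqrt 2) * complex_of_real (1 / sqrt 2) = 1/2"
    by (simp flip: of_real_mult)
  have s2: "complex_of_real (sqrt 2) * complex_of_real (sqrt 2) = 2"
    by (simp flip: of_real_mult)
  show "(hmat * adj hmat) $$ (i, j) = (1\<^sub>m 2::complex mat) $$ (i, j)"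
    using lt2[OF ij(1)] lt2[OF ij(2)]
    by (auto simp: hmat_def adj_def times_mat_def scalar_prod_def sum2 s s2)
qed (auto simp: hmat_def adj_def)

lemma unitary_rmat: "unitary2 (rmat \<phi>)"
  unfolding unitary2_def
proof (intro conjI rmat_carrier eq_matI)
  fix i j assume "i < dim_row (1\<^sub>m 2)" "j < dim_col (1\<^sub>m (2::nat))"
  then have ij: "i < 2" "j < 2" by auto
  have s: "cis \<phi> * cnj (cis \<phi>) = 1" by (simp add: cis_cnj cis_mult)
  show "(rmat \<phi> * adj (rmat \<phi>)) $$ (i, j) = (1\<^sub>m 2::complex mat) $$ (i, j)"
    using lt2[OF ij(1)] lt2[OF ij(2)]
    by (auto simp: rmat_def adj_def times_mat_def scalar_prod_def sum2 s)
qed (auto simp: rmat_def adj_def)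

lemma bit_divmod: "bit x q \<longleftrightarrow> (x::nat) div 2^q mod 2 = 1"
  by (simp add: bit_iff_odd odd_iff_mod_2_eq_one)

lemma rmat_apply:
  assumes "q < m"
  shows "single_gate m (Suc q) (rmat \<phi>) *\<^sub>v vec (2^m) f = vec (2^m) (\<lambda>x. (if bit x q then cis \<phi> else 1) * f x)"
proof -
  have "x div (2*2^q) * (2*2^q) + x mod 2^q = x" if "\<not> bit x q" for x :: nat
    using idx_decomp[of x "2^q"] that by (simp add: bit_divmod)
  moreover have "x div (2*2^q) * (2*2^q) + (2^q + x mod 2^q) = x" if "bit x q" for x :: nat
    using idx_decomp[of x "2^q"] that by (simp add: bit_divmod)
  ultimately show ?thesis
    unfolding single_gate_apply[OF assms rmat_carrier]
    by (intro eq_vecI) (auto simp: rmat_def bit_divmod)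
qed

lemma hmat_apply:
  assumes "q < m"
  shows "single_gate m (Suc q) hmat *\<^sub>v vec (2^m) f = vec (2^m) (\<lambda>x.
     complex_of_real (1 / sqrt 2) * (f (x div (2*2^q) * (2*2^q) + x mod 2^q) +
     (if bit x q then -1 else 1) * f (x div (2*2^q) * (2*2^q) + (2^q + x mod 2^q))))"
  unfolding single_gate_apply[OF assms hmat_carrier]
  by (intro eq_vecI) (auto simp: hmat_def bit_divmod algebra_simps)

lemma cnot_bit: "c \<ge> 1 \<Longrightarrow> g \<ge> 1 \<Longrightarrow> bit (cnot_map c g x) i \<longleftrightarrow> (if i = g-1 \<and> bit x (c-1) then \<not> bit x i else bit x i)"
  unfolding cnot_bits by (auto simp: bit_flip_bit_iff)

definition cph :: "nat \<Rightarrow> real \<Rightarrow> nat \<Rightarrow> nat \<Rightarrow> complex mat list" where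
  "cph m \<theta> p q = [single_gate m (Suc p) (rmat (\<theta>/2)), single_gate m (Suc q) (rmat (\<theta>/2)),
     cnot_gate m (Suc p) (Suc q), single_gate m (Suc q) (rmat (-\<theta>/2)), cnot_gate m (Suc p) (Suc q)]"

lemma cph_apply:
  assumes "p < m" "q < m" "p \<noteq> q"
  shows "run (cph m \<theta> p q) (vec (2^m) f) = vec (2^m) (\<lambda>x. (if bit x p \<and> bit x q then cis \<theta> else 1) * f x)"
proof -
  have inv: "cnot_map (Suc p) (Suc q) (cnot_map (Suc p) (Suc q) x) = x" for x
    using cnot_invol assms by simp
  have bq: "bit (cnot_map (Suc p) (Suc q) x) q \<longleftrightarrow> (bit x q \<noteq> bit x p)" for x
    using cnot_bit[of "Suc p" "Suc q" x q] by auto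
  have bp: "bit (cnot_map (Suc p) (Suc q) x) p \<longleftrightarrow> bit x p" for x
    using cnot_bit[of "Suc p" "Suc q" x p] assms by auto
  have t: "\<theta>/2 + \<theta>/2 = \<theta>" by simp
  show ?thesis
    unfolding cph_def using assms
    apply (simp add: rmat_apply cnot_apply inv bq bp)
    apply (intro eq_vecI)
     apply (auto simp: cis_mult t mult.assoc[symmetric])
    done
qed

definition swb :: "nat \<Rightarrow> nat \<Rightarrow> nat \<Rightarrow> nat" where
  "swb p q x = cnot_map (Suc p) (Suc q) (cnot_map (Suc q) (Suc p) (cnot_map (Suc p) (Suc q) x))"

definition swapg :: "nat \<Rightarrow> nat \<Rightarrow> nat \<Rightarrow> complex mat list" where
  "swapg m p q = [cnot_gate m (Suc p) (Suc q), cnot_gate m (Suc q) (Suc p), cnot_gate m (Suc p) (Suc q)]"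

lemma swapg_apply:
  assumes "p < m" "q < m" "p \<noteq> q"
  shows "run (swapg m p q) (vec (2^m) f) = vec (2^m) (\<lambda>x. f (swb p q x))"
  unfolding swapg_def swb_def using assms by (simp add: cnot_apply)

lemma swb_bit:
  assumes "p \<noteq> q"
  shows "bit (swb p q x) i \<longleftrightarrow> bit x (if i = p then q else if i = q then p else i)"
  unfolding swb_def using assms by (auto simp: cnot_bit)


fun shiftc :: "nat \<Rightarrow> nat \<Rightarrow> complex mat list" where
  "shiftc m 0 = []"
| "shiftc m (Suc n) = shiftc m n @ swapg m n (Suc n)"

fun rot :: "nat \<Rightarrow> nat \<Rightarrow> nat" where
  "rot 0 x = x"
| "rot (Suc n) x = rot n (swb n (Suc n) x)"

lemma shiftc_apply: "n < m \<Longrightarrow> run (shiftc m n) (vec (2^m) f) = vec (2^m) (\<lambda>x. f (rot n x))"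
proof (induction n arbitrary: f)
  case 0 then show ?case by (simp add: vec_eq_iff)
next
  case (Suc n)
  then show ?case by (simp add: swapg_apply)
qed

lemma rot_bit: "bit (rot n x) i \<longleftrightarrow> bit x (if i = 0 then n else if i \<le> n then i - 1 else i)"
proof (induction n arbitrary: x)
  case 0 then show ?case by simp
next
  case (Suc n)
  have "bit (rot (Suc n) x) i = bit (swb n (Suc n) x) (if i = 0 then n else if i \<le> n then i - 1 else i)"
    using Suc.IH by simp
  also have "\<dots> = bit x (if i = 0 then Suc n else if i \<le> Suc n then i - 1 else i)"
  proof -
    consider "i = 0" | "0 < i \<and> i \<le> n" | "i = Suc n" | "i > Suc n" by linarith
    then show ?thesis
    proof cases
      case 2
      then have "i - 1 \<noteq> n" "i - 1 \<noteq> Suc n" by auto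
      then show ?thesis using 2 by (simp add: swb_bit)
    qed (auto simp: swb_bit)
  qed
  finally show ?case .
qed

lemma bit_add_mul_pow:
  assumes "(b::nat) < 2^k"
  shows "bit (a * 2^k + b) i \<longleftrightarrow> (if i < k then bit b i else bit a (i - k))"
proof (cases "i < k")
  case True
  have e: "(2::nat)^k = 2^(k-i) * 2^i" using True by (simp add: power_add[symmetric])
  have "a * 2^k + b = b + (a*2^(k-i))*2^i" unfolding e by (simp add: algebra_simps)
  then have "(a * 2^k + b) div 2^i = (b + (a*2^(k-i))*2^i) div 2^i" by (simp only:)
  also have "\<dots> = a * 2^(k-i) + b div 2^i" by (rule div_mult_self1) simp
  finally have "(a * 2^k + b) div 2^i = a * 2^(k-i) + b div 2^i" .
  moreover have "even (a * 2^(k-i))" using True by simp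
  ultimately show ?thesis using True by (simp add: bit_iff_odd)
next
  case False
  have e: "(2::nat)^i = 2^k * 2^(i-k)" using False by (simp add: power_add[symmetric])
  have "(a * 2^k + b) div 2^i = (a * 2^k + b) div 2^k div 2^(i-k)" unfolding e by (simp add: div_mult2_eq)
  also have "(a * 2^k + b) div 2^k = a" using assms by simp
  finally show ?thesis using False by (simp add: bit_iff_odd)
qed

lemma rot_arith:
  assumes "k0 < 2" "k' < 2^n"
  shows "rot n (h * 2^Suc n + (k0 * 2^n + k')) = h * 2^Suc n + (k0 + k' * 2)"
proof (rule bit_eqI)
  fix i
  have "k0 = 0 \<or> k0 = 1" using assms by auto
  then have l1: "k0 * 2^n + k' < 2^Suc n" using assms by auto
  have l2: "k0 + k' * 2 < 2^Suc n" using assms by simp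
  have l3: "k0 < 2^1" using assms by simp
  have k01: "k0 = 0 \<or> k0 = 1" using assms by auto
  have bk0: "bit k0 j \<longleftrightarrow> j = 0 \<and> k0 = 1" for j using k01
    by (auto simp: bit_1_iff bit_Suc_0_iff)
  have A: "bit (h * 2^Suc n + (k0 * 2^n + k')) j \<longleftrightarrow>
      (if j < n then bit k' j else if j = n then k0 = 1 else bit h (j - Suc n))" for j
    unfolding bit_add_mul_pow[OF l1] bit_add_mul_pow[OF assms(2)]
    by (cases "j < n"; cases "j = n"; simp add: bk0)
  have B: "bit (h * 2^Suc n + (k0 + k' * 2)) j \<longleftrightarrow>
      (if j = 0 then k0 = 1 else if j < Suc n then bit k' (j - 1) else bit h (j - Suc n))" for j
  proof -
    have e: "k0 + k' * 2 = k' * 2^1 + k0" by simp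
    show ?thesis unfolding bit_add_mul_pow[OF l2] unfolding e bit_add_mul_pow[OF l3]
      by (cases "j = 0"; simp add: bk0)
  qed
  show "bit (rot n (h * 2^Suc n + (k0 * 2^n + k'))) i = bit (h * 2^Suc n + (k0 + k' * 2)) i"
    unfolding rot_bit A B by (cases "i = 0"; cases "i < Suc n"; cases "i - 1 < n"; simp)
qed


definition ee :: "real \<Rightarrow> complex" where "ee r = cis (2 * pi * r)"

lemma ee_add: "ee (a + b) = ee a * ee b"
  unfolding ee_def by (simp add: cis_mult distrib_left)

lemma ee_int: "ee (of_int z) = 1"
  unfolding ee_def by (rule cis_multiple_2pi) simp

lemma ee_zero[simp]: "ee 0 = 1" unfolding ee_def by simp

lemma ee_half: "s = 1 \<or> s = -1 \<Longrightarrow> ee (of_int s / 2) = -1"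
  unfolding ee_def by (auto simp: complex_eq_iff)

lemma mod_pow_Suc: "(x::nat) mod 2^Suc k = x mod 2^k + (if bit x k then 2^k else 0)"
proof -
  have "x mod (2^k * 2) = 2^k * (x div 2^k mod 2) + x mod 2^k" by (rule mod_mult2_eq)
  then show ?thesis by (auto simp: bit_divmod mult.commute)
qed

definition phs :: "nat \<Rightarrow> int \<Rightarrow> nat \<Rightarrow> nat \<Rightarrow> real \<Rightarrow> complex mat list" where
  "phs m s n k D = concat (map (\<lambda>b. cph m (2*pi*(of_int s * 2^b / D)) b n) [0..<k])"

lemma phs_apply:
  assumes "k \<le> n" "n < m"
  shows "run (phs m s n k D) (vec (2^m) f) =
    vec (2^m) (\<lambda>x. (if bit x n then ee (of_int s * real (x mod 2^k) / D) else 1) * f x)"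
  using assms(1)
proof (induction k)
  case 0 then show ?case by (simp add: phs_def vec_eq_iff)
next
  case (Suc k)
  have k: "k < m" "k \<noteq> n" using Suc assms by auto
  have IH: "run (phs m s n k D) (vec (2^m) f) =
    vec (2^m) (\<lambda>x. (if bit x n then ee (of_int s * real (x mod 2^k) / D) else 1) * f x)"
    using Suc by simp
  have e: "ee (of_int s * 2^k / D) * ee (of_int s * real (x mod 2^k) / D)
      = ee (of_int s * real (x mod 2^k + 2^k) / D)" for x :: nat
    by (simp add: ee_add[symmetric] add_divide_distrib algebra_simps)
  have e': "ee (real_of_int s * 2 ^ k / D) * ee (real_of_int s * X / D)
     = ee (real_of_int s * (X + 2 ^ k) / D)" for X :: real
    by (simp add: ee_add[symmetric] add_divide_distrib algebra_simps)
  have "run (phs m s n (Suc k) D) (vec (2^m) f) = run (cph m (2*pi*(of_int s * 2^k / D)) k n) (run (phs m s n k D) (vec (2^m) f))"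
    by (simp add: phs_def)
  also have "\<dots> = vec (2^m) (\<lambda>x. (if bit x k \<and> bit x n then ee (of_int s * 2^k / D) else 1) *
      ((if bit x n then ee (of_int s * real (x mod 2^k) / D) else 1) * f x))"
    unfolding IH cph_apply[OF k(1) assms(2) k(2)] ee_def ..
  also have "\<dots> = vec (2^m) (\<lambda>x. (if bit x n then ee (of_int s * real (x mod 2^Suc k) / D) else 1) * f x)"
  proof (intro eq_vecI)
    fix x :: nat
    have mx: "x mod 2^Suc k = x mod 2^k + (if bit x k then 2^k else 0)" by (rule mod_pow_Suc)
    show "vec (2^m) (\<lambda>x. (if bit x k \<and> bit x n then ee (of_int s * 2^k / D) else 1) *
      ((if bit x n then ee (of_int s * real (x mod 2^k) / D) else 1) * f x)) $ x =
      vec (2^m) (\<lambda>x. (if bit x n then ee (of_int s * real (x mod 2^Suc k) / D) else 1) * f x) $ x"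
      if "x < dim_vec (vec (2^m) (\<lambda>x. (if bit x n then ee (of_int s * real (x mod 2^Suc k) / D) else 1) * f x))"
      using that
      apply (cases "bit x n"; cases "bit x k")
         apply (simp_all only: mx index_vec dim_vec if_True if_False simp_thms)
         apply (simp_all add: e')
      done
  qed simp
  finally show ?case .
qed


definition QF :: "int \<Rightarrow> nat \<Rightarrow> (nat \<Rightarrow> complex) \<Rightarrow> nat \<Rightarrow> complex" where
  "QF s n f x = complex_of_real (1 / sqrt (2^n)) *
     (\<Sum>k<2^n. ee (of_int s * real (x mod 2^n) * real k / 2^n) * f (x div 2^n * 2^n + k))"

lemma sum_even_odd: "(\<Sum>k<2*N. F k) = (\<Sum>k<N. F (2*k)) + (\<Sum>k<N. F (2*k+1))"
  for F :: "nat \<Rightarrow> 'a::comm_monoid_add"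
  by (induction N) (simp_all add: algebra_simps)

lemma ee_shift_int: "ee (r + of_int z) = ee r"
  by (simp add: ee_add ee_int)

lemma qft_step_eq:
  fixes f :: "nat \<Rightarrow> complex" and x n :: nat and s :: int
  assumes s: "s = 1 \<or> s = -1"
  defines "N \<equiv> (2::nat)^n"
  defines "x0 \<equiv> x div (2*N) * (2*N) + x mod N"
  defines "x1 \<equiv> x div (2*N) * (2*N) + (N + x mod N)"
  defines "g \<equiv> \<lambda>y. (if bit y n then ee (of_int s * real (y mod N) / (2 * N)) else 1) * QF s n (\<lambda>z. f (rot n z)) y"
  shows "complex_of_real (1 / sqrt 2) * (g x0 + (if bit x n then -1 else 1) * g x1) = QF s (Suc n) f x"
proof -
  define h where "h = x div (2*N)"
  define j where "j = x mod N"
  have N0: "N > 0" unfolding N_def by simp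
  have jN: "j < N" unfolding j_def using N0 by simp
  have x0e: "x0 = j + (2*h) * N" unfolding x0_def h_def j_def by simp
  have x1e: "x1 = j + (2*h+1) * N" unfolding x1_def h_def j_def by (simp add: algebra_simps)
  have x0d: "x0 div N = 2*h" "x0 mod N = j" unfolding x0e using jN by simp_all
  have x1d1: "x1 div N = 2*h+1" unfolding x1e using jN N0
    by (subst div_mult_self1; simp)
  have "x1 mod N = j mod N" unfolding x1e by (rule mod_mult_self1)
  then have x1d: "x1 div N = 2*h+1" "x1 mod N = j" using x1d1 jN by simp_all
  have bx0: "\<not> bit x0 n" using x0d unfolding N_def by (simp add: bit_divmod)
  have bx1: "bit x1 n" using x1d unfolding N_def by (simp add: bit_divmod)
  have r0: "rot n (x0 div N * N + k) = h * (2*N) + 2*k" if "k < N" for k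
  proof -
    have "x0 div N * N + k = h * 2^Suc n + (0*2^n + k)" unfolding x0d by (simp add: N_def)
    then show ?thesis using rot_arith[of 0 k n h] that by (simp add: N_def algebra_simps)
  qed
  have r1: "rot n (x1 div N * N + k) = h * (2*N) + 2*k + 1" if "k < N" for k
  proof -
    have "x1 div N * N + k = h * 2^Suc n + (1*2^n + k)" unfolding x1d by (simp add: N_def algebra_simps)
    then show ?thesis using rot_arith[of 1 k n h] that by (simp add: N_def algebra_simps)
  qed
  define cn where "cn = complex_of_real (1 / sqrt (2^n))"
  define E where "E = (\<lambda>k::nat. ee (of_int s * real j * real k / N))"
  have RN: "(2::real)^n = real N" by (simp add: N_def)
  have g0: "g x0 = cn * (\<Sum>k<N. E k * f (h * (2*N) + 2*k))"
  proof -
    have "g x0 = QF s n (\<lambda>z. f (rot n z)) x0" unfolding g_def using bx0 by simp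
    also have "\<dots> = cn * (\<Sum>k<N. ee (of_int s * real (x0 mod N) * real k / 2^n) * f (rot n (x0 div N * N + k)))"
      unfolding QF_def cn_def N_def ..
    also have "\<dots> = cn * (\<Sum>k<N. E k * f (h * (2*N) + 2*k))"
      unfolding E_def x0d(2) RN by (intro arg_cong[where f="(*) cn"] sum.cong) (simp_all add: r0)
    finally show ?thesis .
  qed
  have g1: "g x1 = ee (of_int s * real j / (2*N)) * (cn * (\<Sum>k<N. E k * f (h * (2*N) + 2*k + 1)))"
  proof -
    have "g x1 = ee (of_int s * real j / (2*N)) * QF s n (\<lambda>z. f (rot n z)) x1" unfolding g_def using bx1 x1d by simp
    also have "QF s n (\<lambda>z. f (rot n z)) x1 = cn * (\<Sum>k<N. ee (of_int s * real (x1 mod N) * real k / 2^n) * f (rot n (x1 div N * N + k)))"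
      unfolding QF_def cn_def N_def ..
    also have "\<dots> = cn * (\<Sum>k<N. E k * f (h * (2*N) + 2*k + 1))"
      unfolding E_def x1d(2) RN by (intro arg_cong[where f="(*) cn"] sum.cong) (simp_all add: r1)
    finally show ?thesis .
  qed
  define b :: nat where "b = (if bit x n then 1 else 0)"
  have xm: "x mod (2*N) = j + b * N"
    using mod_pow_Suc[of x n] unfolding j_def b_def N_def by simp
  have xd: "x div (2*N) * (2*N) = h * (2*N)" unfolding h_def ..
  have sgn: "ee (of_int s * real b / 2) = (if bit x n then -1 else 1)"
    using ee_half[OF s] unfolding b_def by simp
  have Te: "ee (of_int s * real (x mod (2*N)) * real (2*k) / real (2*N)) = E k" for k
  proof -
    have "of_int s * real (x mod (2*N)) * real (2*k) / real (2*N) = of_int s * real j * real k / N + of_int (s * b * k)"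
      unfolding xm using N0 by (simp add: field_simps)
    then have "ee (of_int s * real (x mod (2*N)) * real (2*k) / real (2*N)) = ee (of_int s * real j * real k / N + of_int (s * b * k))"
      by (rule arg_cong)
    then show ?thesis unfolding E_def ee_shift_int .
  qed
  have To: "ee (of_int s * real (x mod (2*N)) * real (2*k+1) / real (2*N)) =
      E k * (ee (of_int s * real j / (2*N)) * (if bit x n then -1 else 1))" for k
  proof -
    have "of_int s * real (x mod (2*N)) * real (2*k+1) / real (2*N) =
        (of_int s * real j * real k / N + (of_int s * real j / (2*N) + of_int s * real b / 2)) + of_int (s * b * k)"
      unfolding xm using N0 by (simp add: field_simps)
    then have "ee (of_int s * real (x mod (2*N)) * real (2*k+1) / real (2*N)) =
       ee ((of_int s * real j * real k / N + (of_int s * real j / (2*N) + of_int s * real b / 2)) + of_int (s * b * k))"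
      by (rule arg_cong)
    then show ?thesis unfolding ee_shift_int unfolding E_def sgn[symmetric] ee_add .
  qed
  have c: "complex_of_real (1 / sqrt 2) * cn = complex_of_real (1 / sqrt (2^Suc n))"
    unfolding cn_def by (simp add: real_sqrt_mult flip: of_real_mult)
  have "QF s (Suc n) f x = complex_of_real (1 / sqrt (2^Suc n)) *
      (\<Sum>k<2*N. ee (of_int s * real (x mod (2*N)) * real k / real (2*N)) * f (h * (2*N) + k))"
    unfolding QF_def N_def h_def by simp
  also have "\<dots> = complex_of_real (1 / sqrt (2^Suc n)) *
      ((\<Sum>k<N. E k * f (h * (2*N) + 2*k)) +
       (ee (of_int s * real j / (2*N)) * (if bit x n then -1 else 1)) * (\<Sum>k<N. E k * f (h * (2*N) + 2*k + 1)))"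
    unfolding sum_even_odd Te To by (simp add: sum_distrib_left algebra_simps)
  also have "\<dots> = complex_of_real (1 / sqrt 2) * (g x0 + (if bit x n then -1 else 1) * g x1)"
    unfolding g0 g1 c[symmetric] by (simp add: algebra_simps)
  finally show ?thesis ..
qed

fun qft :: "nat \<Rightarrow> int \<Rightarrow> nat \<Rightarrow> complex mat list" where
  "qft m s 0 = []"
| "qft m s (Suc n) = shiftc m n @ qft m s n @ phs m s n n (2^Suc n) @ [single_gate m (Suc n) hmat]"

lemma qft_apply:
  assumes "n \<le> m" "s = 1 \<or> s = -1"
  shows "run (qft m s n) (vec (2^m) f) = vec (2^m) (QF s n f)"
  using assms(1)
proof (induction n arbitrary: f)
  case 0
  then show ?case by (simp add: QF_def vec_eq_iff)
next
  case (Suc n)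
  then have n: "n < m" by simp
  have "run (qft m s (Suc n)) (vec (2^m) f) = single_gate m (Suc n) hmat *\<^sub>v
     run (phs m s n n (2^Suc n)) (run (qft m s n) (run (shiftc m n) (vec (2^m) f)))" by simp
  also have "\<dots> = single_gate m (Suc n) hmat *\<^sub>v vec (2^m) (\<lambda>x.
     (if bit x n then ee (of_int s * real (x mod 2^n) / 2^Suc n) else 1) * QF s n (\<lambda>z. f (rot n z)) x)"
    unfolding shiftc_apply[OF n] Suc.IH[OF less_imp_le[OF n]] phs_apply[OF order.refl n] ..
  also have "(2::real)^Suc n = real (2 * 2^n :: nat)" by simp
  also have "single_gate m (Suc n) hmat *\<^sub>v vec (2^m) (\<lambda>x.
     (if bit x n then ee (of_int s * real (x mod 2^n) / real (2 * 2^n :: nat)) else 1) * QF s n (\<lambda>z. f (rot n z)) x)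
     = vec (2^m) (QF s (Suc n) f)"
    unfolding hmat_apply[OF n]
  proof (intro eq_vecI)
    fix x assume "x < dim_vec (vec (2^m) (QF s (Suc n) f))"
    then have x: "x < 2^m" by simp
    show "vec (2 ^ m) (\<lambda>x. complex_of_real (1 / sqrt 2) *
         ((if bit (x div (2 * 2 ^ n) * (2 * 2 ^ n) + x mod 2 ^ n) n then ee (real_of_int s * real ((x div (2 * 2 ^ n) * (2 * 2 ^ n) + x mod 2 ^ n) mod 2 ^ n) / real (2 * 2 ^ n :: nat)) else 1) *
          QF s n (\<lambda>z. f (rot n z)) (x div (2 * 2 ^ n) * (2 * 2 ^ n) + x mod 2 ^ n) +
          (if bit x n then - 1 else 1) *
          ((if bit (x div (2 * 2 ^ n) * (2 * 2 ^ n) + (2 ^ n + x mod 2 ^ n)) n then ee (real_of_int s * real ((x div (2 * 2 ^ n) * (2 * 2 ^ n) + (2 ^ n + x mod 2 ^ n)) mod 2 ^ n) / real (2 * 2 ^ n :: nat)) else 1) *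
           QF s n (\<lambda>z. f (rot n z)) (x div (2 * 2 ^ n) * (2 * 2 ^ n) + (2 ^ n + x mod 2 ^ n))))) $ x =
         vec (2 ^ m) (QF s (Suc n) f) $ x"
      unfolding index_vec[OF x] by (rule qft_step_eq[OF assms(2)])
  qed simp
  finally show ?case .
qed


lemma ee_pow: "ee a ^ l = ee (real l * a)"
  unfolding ee_def by (simp add: DeMoivre mult_ac)

lemma ee_eq_1: assumes "ee r = 1" shows "\<exists>k::int. r = of_int k"
proof -
  have "cos (2*pi*r) = 1" using assms unfolding ee_def by (auto simp: complex_eq_iff)
  then obtain k :: int where "2*pi*r = k * 2 * pi" by (auto simp: cos_one_2pi_int)
  then have "r = k" by simp
  then show ?thesis by blast
qed

lemma ee_orth:
  assumes N: "N > 0"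
  shows "(\<Sum>l<N. ee (real l * of_int d / real N)) = (if int N dvd d then of_nat N else 0)"
proof -
  define z where "z = ee (of_int d / real N)"
  have zl: "ee (real l * of_int d / real N) = z ^ l" for l
    unfolding z_def ee_pow by simp
  show ?thesis
  proof (cases "int N dvd d")
    case True
    then obtain t where "d = int N * t" by blast
    then have "z = 1" unfolding z_def using N by (simp add: ee_int)
    then show ?thesis using True by (simp add: zl)
  next
    case False
    have z1: "z \<noteq> 1"
    proof
      assume "z = 1"
      then obtain k :: int where "of_int d / real N = of_int k" using ee_eq_1 unfolding z_def by blast
      then have "of_int d = (of_int (int N * k) :: real)" using N by (simp add: field_simps)
      then have "d = int N * k" by (simp only: of_int_eq_iff)
      then show False using False by simp
    qed
    have zN: "z ^ N = 1" unfolding z_def ee_pow using N by (simp add: ee_int)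
    have "(\<Sum>l<N. ee (real l * of_int d / real N)) = (\<Sum>l<N. z ^ l)" by (simp add: zl)
    also have "\<dots> = 0" using z1 zN by (simp add: geometric_sum)
    finally show ?thesis using False by simp
  qed
qed

lemma dvd_sel:
  fixes N k j a :: nat
  assumes "k < N" "j < N" "a \<le> 1" "N > 0"
  shows "int N dvd (int k + int a - int j) \<longleftrightarrow> k = (j + N - a) mod N"
proof -
  have "int N dvd (int k + int a - int j) \<longleftrightarrow> int N dvd (int k - int (j + N - a))"
  proof -
    have "int k - int (j + N - a) = (int k + int a - int j) - int N" using assms by simp
    then show ?thesis by (metis dvd_diff dvd_refl diff_add_cancel dvd_add)
  qed
  also have "\<dots> \<longleftrightarrow> int k mod int N = int (j + N - a) mod int N" by (simp add: mod_eq_dvd_iff)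
  also have "\<dots> \<longleftrightarrow> k mod N = (j + N - a) mod N" by (simp flip: of_nat_mod)
  also have "\<dots> \<longleftrightarrow> k = (j + N - a) mod N" using assms by simp
  finally show ?thesis .
qed

definition cinc :: "nat \<Rightarrow> nat \<Rightarrow> complex mat list" where
  "cinc m n = qft m 1 n @ phs m 1 n n (2^n) @ qft m (-1) n"

lemma cinc_point:
  fixes f :: "nat \<Rightarrow> complex" and x n :: nat
  defines "N \<equiv> (2::nat)^n"
  defines "a \<equiv> (if bit x n then 1 else 0 :: nat)"
  shows "QF (-1) n (\<lambda>y. (if bit y n then ee (of_int 1 * real (y mod 2^n) / 2^n) else 1) * QF 1 n f y) x
     = f (x div N * N + (x mod N + N - a) mod N)"
proof -
  define xh where "xh = x div N * N"
  define j where "j = x mod N"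
  have N0: "N > 0" unfolding N_def by simp
  have jN: "j < N" unfolding j_def using N0 by simp
  define cN where "cN = complex_of_real (1 / sqrt (real N))"
  have cc: "cN * cN = 1 / of_nat N"
  proof -
    have "1 / sqrt (real N) * (1 / sqrt (real N)) = 1 / real N" using N0 by simp
    then have "complex_of_real (1 / sqrt (real N) * (1 / sqrt (real N))) = 1 / of_nat N" by simp
    then show ?thesis unfolding cN_def of_real_mult .
  qed
  have RN: "(2::real)^n = real N" unfolding N_def by simp
  have hl: "(xh + l) mod N = l" "(xh + l) div N * N = xh" "bit (xh + l) n = bit x n" if "l < N" for l
  proof -
    have e: "xh + l = l + (x div N) * N" unfolding xh_def by simp
    show "(xh + l) mod N = l" unfolding e using that by simp
    have d: "(xh + l) div N = x div N" unfolding e using that by simp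
    show "(xh + l) div N * N = xh" by (subst d) (simp add: xh_def)
    show "bit (xh + l) n = bit x n" using d unfolding N_def by (simp add: bit_divmod)
  qed
  have ex: "ee (of_int (-1) * real j * real l / real N) * (ee (real l * real a / real N) * ee (of_int 1 * real l * real k / real N))
      = ee (real l * of_int (int k + int a - int j) / real N)" for l k
  proof -
    have "ee (of_int (-1) * real j * real l / real N) * (ee (real l * real a / real N) * ee (of_int 1 * real l * real k / real N))
      = ee (of_int (-1) * real j * real l / real N + (real l * real a / real N + of_int 1 * real l * real k / real N))"
      by (simp only: ee_add)
    also have "\<dots> = ee (real l * of_int (int k + int a - int j) / real N)"
      by (rule arg_cong[where f=ee]) (simp add: diff_divide_distrib add_divide_distrib algebra_simps)
    finally show ?thesis .
  qed
  have Dl: "(if bit (xh+l) n then ee (of_int 1 * real ((xh+l) mod N) / real N) else 1) = ee (real l * real a / real N)"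
    if "l < N" for l
    using hl[OF that] unfolding a_def by simp
  have Ql: "QF 1 n f (xh+l) = cN * (\<Sum>k<N. ee (of_int 1 * real l * real k / real N) * f (xh + k))"
    if "l < N" for l
    unfolding QF_def RN N_def[symmetric] hl[OF that] cN_def ..
  have "QF (-1) n (\<lambda>y. (if bit y n then ee (of_int 1 * real (y mod 2^n) / 2^n) else 1) * QF 1 n f y) x
    = cN * (\<Sum>l<N. ee (of_int (-1) * real j * real l / real N) *
        (ee (real l * real a / real N) * (cN * (\<Sum>k<N. ee (of_int 1 * real l * real k / real N) * f (xh + k)))))"
    unfolding QF_def[of "-1"] cN_def[symmetric] RN N_def[symmetric] j_def[symmetric] xh_def[symmetric]
    apply (intro arg_cong[where f="(*) cN"] sum.cong refl)
    subgoal for l using Dl[of l] Ql[of l] by simp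
    done
  also have "\<dots> = (\<Sum>l<N. \<Sum>k<N. (cN * cN) * (ee (of_int (-1) * real j * real l / real N) * (ee (real l * real a / real N) * ee (of_int 1 * real l * real k / real N))) * f (xh + k))"
    by (simp add: sum_distrib_left mult_ac)
  also have "\<dots> = (\<Sum>k<N. \<Sum>l<N. (cN * cN) * (ee (of_int (-1) * real j * real l / real N) * (ee (real l * real a / real N) * ee (of_int 1 * real l * real k / real N))) * f (xh + k))"
    by (rule sum.swap)
  also have "\<dots> = (\<Sum>k<N. f (xh + k) * ((cN * cN) * (\<Sum>l<N. ee (real l * of_int (int k + int a - int j) / real N))))"
    unfolding ex by (simp add: sum_distrib_left sum_distrib_right mult_ac)
  also have "\<dots> = (\<Sum>k<N. if k = (j + N - a) mod N then f (xh + k) else 0)"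
  proof (intro sum.cong refl)
    fix k assume "k \<in> {..<N}"
    then have k: "k < N" by simp
    have a1: "a \<le> 1" unfolding a_def by simp
    show "f (xh + k) * ((cN * cN) * (\<Sum>l<N. ee (real l * of_int (int k + int a - int j) / real N))) =
        (if k = (j + N - a) mod N then f (xh + k) else 0)"
      unfolding ee_orth[OF N0] cc dvd_sel[OF k jN a1 N0] using N0 by simp
  qed
  also have "\<dots> = f (xh + (j + N - a) mod N)" using N0 by simp
  finally show ?thesis unfolding xh_def j_def .
qed

lemma cinc_apply:
  assumes "n < m"
  shows "run (cinc m n) (vec (2^m) f) =
    vec (2^m) (\<lambda>x. f (x div 2^n * 2^n + (x mod 2^n + 2^n - (if bit x n then 1 else 0)) mod 2^n))"
  unfolding cinc_def run_append qft_apply[OF less_imp_le[OF assms] disjI1[OF refl]]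
    phs_apply[OF order.refl assms] qft_apply[OF less_imp_le[OF assms] disjI2[OF refl]]
  by (rule arg_cong[where f="vec (2^m)"], rule ext, rule cinc_point)


definition cnotsk :: "nat \<Rightarrow> nat \<Rightarrow> nat \<Rightarrow> complex mat list" where
  "cnotsk m n k = map (\<lambda>b. cnot_gate m (Suc n) (Suc b)) [0..<k]"

fun cnx :: "nat \<Rightarrow> nat \<Rightarrow> nat \<Rightarrow> nat" where
  "cnx n 0 x = x"
| "cnx n (Suc k) x = cnx n k (cnot_map (Suc n) (Suc k) x)"

lemma cnotsk_apply:
  assumes "k \<le> n" "n < m"
  shows "run (cnotsk m n k) (vec (2^m) f) = vec (2^m) (\<lambda>x. f (cnx n k x))"
  using assms(1)
proof (induction k)
  case 0 then show ?case by (simp add: cnotsk_def vec_eq_iff)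
next
  case (Suc k)
  have IH: "run (cnotsk m n k) (vec (2^m) f) = vec (2^m) (\<lambda>x. f (cnx n k x))" using Suc by simp
  have "run (cnotsk m n (Suc k)) (vec (2^m) f) = cnot_gate m (Suc n) (Suc k) *\<^sub>v run (cnotsk m n k) (vec (2^m) f)"
    by (simp add: cnotsk_def)
  also have "\<dots> = vec (2^m) (\<lambda>x. f (cnx n k (cnot_map (Suc n) (Suc k) x)))"
    unfolding IH using Suc assms by (subst cnot_apply) auto
  finally show ?case by simp
qed

lemma cnx_bit:
  assumes "k \<le> n"
  shows "bit (cnx n k x) i \<longleftrightarrow> (if i < k \<and> bit x n then \<not> bit x i else bit x i)"
  using assms
proof (induction k arbitrary: x)
  case 0 then show ?case by simp
next
  case (Suc k)
  have kn: "k \<noteq> n" using Suc by simp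
  have b: "bit (cnot_map (Suc n) (Suc k) x) j \<longleftrightarrow> (if j = k \<and> bit x n then \<not> bit x j else bit x j)" for j
    using cnot_bit[of "Suc n" "Suc k" x j] by simp
  have bn: "bit (cnot_map (Suc n) (Suc k) x) n \<longleftrightarrow> bit x n" using b[of n] kn by simp
  show ?case using Suc.IH[of "cnot_map (Suc n) (Suc k) x"] Suc.prems b[of i] bn
    by (cases "i < k"; cases "i = k"; auto)
qed

lemma compl_bits:
  assumes "(j::nat) < 2^n"
  shows "bit (2^n - 1 - j) i \<longleftrightarrow> i < n \<and> \<not> bit j i"
proof -
  define z :: nat where "z = xor (mask n) j"
  have jb: "bit j i \<Longrightarrow> i < n" for i using assms lt_pow_bits[of j n] by (meson not_le)
  have zb: "bit z i \<longleftrightarrow> i < n \<and> \<not> bit j i" for i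
    unfolding z_def using jb[of i] by (auto simp: bit_xor_iff bit_mask_iff)
  have d: "\<And>i. \<not> bit j i \<or> \<not> bit z i" using zb by auto
  have "j + z = mask n"
  proof (rule bit_eqI)
    fix i show "bit (j + z) i = bit (mask n :: nat) i"
      using bit_disjunctive_add_iff[OF d, of i] zb[of i] jb[of i] by (auto simp: bit_mask_iff)
  qed
  then have "z = 2^n - 1 - j" by (simp add: mask_eq_exp_minus_1)
  then show ?thesis using zb by simp
qed

lemma cnx_arith:
  assumes "j < 2^n"
  shows "cnx n n (2^n + j) = 2^n + (2^n - 1 - j)" "cnx n n j = j"
proof -
  have l: "2^n - 1 - j < (2::nat)^n" using assms by simp
  have b1: "bit (1 * 2^n + j) i \<longleftrightarrow> (if i < n then bit j i else i = n)" for i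
    unfolding bit_add_mul_pow[OF assms] by (simp add: bit_1_iff bit_Suc_0_iff)
  have b2: "bit (1 * 2^n + (2^n - 1 - j)) i \<longleftrightarrow> (if i < n then \<not> bit j i else i = n)" for i
    unfolding bit_add_mul_pow[OF l] compl_bits[OF assms] by (simp add: bit_1_iff bit_Suc_0_iff)
  show "cnx n n (2^n + j) = 2^n + (2^n - 1 - j)"
  proof (rule bit_eqI)
    fix i show "bit (cnx n n (2 ^ n + j)) i = bit (2 ^ n + (2 ^ n - 1 - j)) i"
      using b1[of i] b1[of n] b2[of i] unfolding cnx_bit[OF order.refl] by simp
  qed
  have jn: "\<not> bit j n" using assms lt_pow_bits[of j n] by simp
  show "cnx n n j = j"
    by (rule bit_eqI) (simp add: cnx_bit jn)
qed

definition cP :: "nat \<Rightarrow> nat \<Rightarrow> complex mat list" where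
  "cP m n = cnotsk m n n @ cinc m n"

lemma neg_arith:
  fixes j N :: nat
  assumes "j < N"
  shows "N - 1 - (j + N - 1) mod N = (N - j) mod N"
proof (cases "j = 0")
  case True
  then show ?thesis using assms by simp
next
  case False
  then have "j + N - 1 = (j - 1) + 1 * N" by simp
  then have "(j + N - 1) mod N = (j - 1) mod N" by (simp only: mod_mult_self1)
  then have "(j + N - 1) mod N = j - 1" using assms by simp
  then show ?thesis using assms False by simp
qed

lemma cP_apply:
  shows "run (cP (Suc n) n) (vec (2^Suc n) f) =
    vec (2^Suc n) (\<lambda>x. if bit x n then f (2^n + (2^n - x mod 2^n) mod 2^n) else f x)"
proof -
  have "run (cP (Suc n) n) (vec (2^Suc n) f) =
    vec (2^Suc n) (\<lambda>x. f (cnx n n (x div 2^n * 2^n + (x mod 2^n + 2^n - (if bit x n then 1 else 0)) mod 2^n)))"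
    unfolding cP_def run_append cnotsk_apply[OF order.refl lessI] cinc_apply[OF lessI] ..
  also have "\<dots> = vec (2^Suc n) (\<lambda>x. if bit x n then f (2^n + (2^n - x mod 2^n) mod 2^n) else f x)"
  proof (intro eq_vecI)
    fix x assume "x < dim_vec (vec (2^Suc n) (\<lambda>x. if bit x n then f (2^n + (2^n - x mod 2^n) mod 2^n) else f x))"
    then have x: "x < 2 * 2^n" by simp
    define N :: nat where "N = 2^n"
    have N0: "N > 0" unfolding N_def by simp
    have xd: "x div N < 2" using x unfolding N_def by (simp add: div_less_iff_less_mult mult.commute)
    have bx: "bit x n \<longleftrightarrow> x div N = 1" unfolding bit_divmod N_def[symmetric] using xd by auto
    have jN: "x mod N < N" using N0 by simp
    show "vec (2^Suc n) (\<lambda>x. f (cnx n n (x div 2^n * 2^n + (x mod 2^n + 2^n - (if bit x n then 1 else 0)) mod 2^n))) $ x =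
      vec (2^Suc n) (\<lambda>x. if bit x n then f (2^n + (2^n - x mod 2^n) mod 2^n) else f x) $ x"
    proof (cases "bit x n")
      case True
      then have d: "x div N = 1" using bx by simp
      have t: "(x mod N + N - 1) mod N < N" using N0 by simp
      have "cnx n n (x div N * N + (x mod N + N - 1) mod N) = N + (N - 1 - (x mod N + N - 1) mod N)"
        unfolding d using cnx_arith(1)[OF t[unfolded N_def]] unfolding N_def by simp
      also have "\<dots> = N + (N - x mod N) mod N" using neg_arith[OF jN] by simp
      finally show ?thesis using x True unfolding N_def by simp
    next
      case False
      then have d: "x div N = 0" using bx xd by simp
      then have xN: "x < N" using N0 by (simp add: div_eq_0_iff)
      have "cnx n n (x div N * N + (x mod N + N - 0) mod N) = x"
        using d xN cnx_arith(2)[OF xN[unfolded N_def]] unfolding N_def by simp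
      then show ?thesis using x False unfolding N_def by simp
    qed
  qed simp
  finally show ?thesis .
qed


lemma Ha_apply:
  "single_gate (Suc n) (Suc n) hmat *\<^sub>v vec (2^Suc n) f = vec (2^Suc n) (\<lambda>x.
     complex_of_real (1 / sqrt 2) * (f (x mod 2^n) + (if bit x n then -1 else 1) * f (2^n + x mod 2^n)))"
  unfolding hmat_apply[OF lessI]
proof (intro eq_vecI)
  fix x assume "x < dim_vec (vec (2^Suc n) (\<lambda>x.
     complex_of_real (1 / sqrt 2) * (f (x mod 2^n) + (if bit x n then -1 else 1) * f (2^n + x mod 2^n))))"
  then have x: "x < 2 * 2^n" by simp
  then have "x div (2 * 2^n) = 0" by simp
  then show "vec (2 ^ Suc n) (\<lambda>x. complex_of_real (1 / sqrt 2) * (f (x div (2 * 2 ^ n) * (2 * 2 ^ n) + x mod 2 ^ n) +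
          (if bit x n then - 1 else 1) * f (x div (2 * 2 ^ n) * (2 * 2 ^ n) + (2 ^ n + x mod 2 ^ n)))) $ x =
        vec (2^Suc n) (\<lambda>x. complex_of_real (1 / sqrt 2) * (f (x mod 2^n) + (if bit x n then -1 else 1) * f (2^n + x mod 2^n))) $ x"
    using x by simp
qed simp

lemma Sa_apply:
  "single_gate (Suc n) (Suc n) (rmat (pi/2)) *\<^sub>v vec (2^Suc n) f = vec (2^Suc n) (\<lambda>x. (if bit x n then \<i> else 1) * f x)"
  unfolding rmat_apply[OF lessI] cis_pi_half ..

definition Mc :: "nat \<Rightarrow> complex mat list" where
  "Mc n = [single_gate (Suc n) (Suc n) hmat] @ cP (Suc n) n @
     [single_gate (Suc n) (Suc n) hmat, single_gate (Suc n) (Suc n) (rmat (pi/2)), single_gate (Suc n) (Suc n) hmat]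
     @ cP (Suc n) n @ [single_gate (Suc n) (Suc n) hmat]"

lemma low_facts:
  fixes j n :: nat
  assumes "j < 2^n"
  shows "j mod 2^n = j" "\<not> bit j n" "(2^n + j) mod 2^n = j" "bit (2^n + j) n"
proof -
  show "j mod 2^n = j" using assms by simp
  show "\<not> bit j n" using assms lt_pow_bits[of j n] by simp
  show "(2^n + j) mod 2^n = j" using assms by simp
  have "(2^n + j) div 2^n = 1" using assms by simp
  then show "bit (2^n + j) n" by (simp add: bit_divmod)
qed

lemma Mc_apply:
  fixes v :: "complex vec" and n :: nat
  defines "N \<equiv> (2::nat)^n"
  shows "run (Mc n) (vec (2^Suc n) (\<lambda>x. if x < N then v $ x else 0)) =
    vec (2^Suc n) (\<lambda>x. if bit x n then 0 else
       (1 + \<i>) / 2 * v $ (x mod N) + (1 - \<i>) / 2 * v $ ((N - x mod N) mod N))"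
proof -
  define c where "c = complex_of_real (1 / sqrt 2)"
  have cc: "c * c = 1/2" unfolding c_def by (simp flip: of_real_mult)
  have ccz: "c * (c * z) = z / 2" for z by (simp add: mult.assoc[symmetric] cc)
  define lo where "lo x = x mod N" for x
  define ng where "ng j = (N - j) mod N" for j
  have N0: "N > 0" unfolding N_def by simp
  have lo: "lo x < N" for x unfolding lo_def using N0 by simp
  have ngl: "ng j < N" for j unfolding ng_def using N0 by simp
  have ngng: "ng (ng j) = j" if "j < N" for j unfolding ng_def using that
    by (cases "j = 0") (auto simp: mod_if)
  have LF: "lo j = j" "\<not> bit j n" "lo (N + j) = j" "bit (N + j) n" if "j < N" for j
    using low_facts[of j n] that unfolding N_def lo_def by auto
  have LFl: "lo (lo x) = lo x" "\<not> bit (lo x) n" "lo (N + lo x) = lo x" "bit (N + lo x) n" for x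
    using LF[OF lo[of x]] by auto
  have LFn: "lo (ng j) = ng j" "\<not> bit (ng j) n" "lo (N + ng j) = ng j" "bit (N + ng j) n" for j
    using LF[OF ngl[of j]] by auto
  have Hx: "single_gate (Suc n) (Suc n) hmat *\<^sub>v vec (2^Suc n) f = vec (2^Suc n) (\<lambda>x.
     c * (f (lo x) + (if bit x n then -1 else 1) * f (N + lo x)))" for f
    unfolding Ha_apply c_def lo_def N_def ..
  have Px: "run (cP (Suc n) n) (vec (2^Suc n) f) = vec (2^Suc n) (\<lambda>x. if bit x n then f (N + ng (lo x)) else f x)" for f
    unfolding cP_apply lo_def ng_def N_def ..
  define w where "w j = v $ j" for j
  have "run (Mc n) (vec (2^Suc n) (\<lambda>x. if x < N then v $ x else 0)) =
    single_gate (Suc n) (Suc n) hmat *\<^sub>v run (cP (Suc n) n) (single_gate (Suc n) (Suc n) hmat *\<^sub>v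
      (single_gate (Suc n) (Suc n) (rmat (pi/2)) *\<^sub>v (single_gate (Suc n) (Suc n) hmat *\<^sub>v
      run (cP (Suc n) n) (single_gate (Suc n) (Suc n) hmat *\<^sub>v vec (2^Suc n) (\<lambda>x. if x < N then v $ x else 0)))))"
    by (simp add: Mc_def)
  also have "single_gate (Suc n) (Suc n) hmat *\<^sub>v vec (2^Suc n) (\<lambda>x. if x < N then v $ x else 0) =
     vec (2^Suc n) (\<lambda>x. c * w (lo x))"
    unfolding Hx using lo by (intro eq_vecI) (auto simp: w_def)
  also have "run (cP (Suc n) n) (vec (2^Suc n) (\<lambda>x. c * w (lo x))) =
     vec (2^Suc n) (\<lambda>x. c * (if bit x n then w (ng (lo x)) else w (lo x)))"
    unfolding Px by (intro eq_vecI) (auto simp: LFn)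
  also have "single_gate (Suc n) (Suc n) hmat *\<^sub>v vec (2^Suc n) (\<lambda>x. c * (if bit x n then w (ng (lo x)) else w (lo x))) =
     vec (2^Suc n) (\<lambda>x. 1/2 * (w (lo x) + (if bit x n then -1 else 1) * w (ng (lo x))))"
    unfolding Hx by (intro eq_vecI) (auto simp: LFl algebra_simps ccz)
  also have "single_gate (Suc n) (Suc n) (rmat (pi/2)) *\<^sub>v vec (2^Suc n) (\<lambda>x. 1/2 * (w (lo x) + (if bit x n then -1 else 1) * w (ng (lo x)))) =
     vec (2^Suc n) (\<lambda>x. (if bit x n then \<i> else 1) * (1/2 * (w (lo x) + (if bit x n then -1 else 1) * w (ng (lo x)))))"
    unfolding Sa_apply ..
  also have "single_gate (Suc n) (Suc n) hmat *\<^sub>v vec (2^Suc n) (\<lambda>x. (if bit x n then \<i> else 1) * (1/2 * (w (lo x) + (if bit x n then -1 else 1) * w (ng (lo x))))) =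
     vec (2^Suc n) (\<lambda>x. c/2 * ((w (lo x) + w (ng (lo x))) + (if bit x n then -1 else 1) * \<i> * (w (lo x) - w (ng (lo x)))))"
    unfolding Hx by (intro eq_vecI) (auto simp: LFl algebra_simps)
  also have "run (cP (Suc n) n) (vec (2^Suc n) (\<lambda>x. c/2 * ((w (lo x) + w (ng (lo x))) + (if bit x n then -1 else 1) * \<i> * (w (lo x) - w (ng (lo x)))))) =
     vec (2^Suc n) (\<lambda>x. c/2 * ((1 + \<i>) * w (lo x) + (1 - \<i>) * w (ng (lo x))))"
    unfolding Px by (intro eq_vecI) (auto simp: LFn ngng[OF lo] algebra_simps)
  also have "single_gate (Suc n) (Suc n) hmat *\<^sub>v vec (2^Suc n) (\<lambda>x. c/2 * ((1 + \<i>) * w (lo x) + (1 - \<i>) * w (ng (lo x)))) =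
     vec (2^Suc n) (\<lambda>x. if bit x n then 0 else (1 + \<i>) / 2 * w (lo x) + (1 - \<i>) / 2 * w (ng (lo x)))"
  proof -
    have A: "c * (c/2 * ((1 + \<i>) * w (lo x) + (1 - \<i>) * w (ng (lo x))) + (c/2 * ((1 + \<i>) * w (lo x) + (1 - \<i>) * w (ng (lo x)))))
        = (1 + \<i>) / 2 * w (lo x) + (1 - \<i>) / 2 * w (ng (lo x))" for x
    proof -
      have "c * (c/2 * ((1 + \<i>) * w (lo x) + (1 - \<i>) * w (ng (lo x))) + (c/2 * ((1 + \<i>) * w (lo x) + (1 - \<i>) * w (ng (lo x)))))
          = c * (c * ((1 + \<i>) * w (lo x) + (1 - \<i>) * w (ng (lo x))))" by simp
      also have "\<dots> = ((1 + \<i>) * w (lo x) + (1 - \<i>) * w (ng (lo x))) / 2" by (rule ccz)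
      also have "\<dots> = (1 + \<i>) / 2 * w (lo x) + (1 - \<i>) / 2 * w (ng (lo x))" by (simp add: field_simps)
      finally show ?thesis .
    qed
    show ?thesis unfolding Hx by (intro eq_vecI) (auto simp: LFl ccz add_divide_distrib)
  qed
  finally show ?thesis unfolding w_def lo_def ng_def .
qed


lemma coef_id: "(1 + \<i>) / 2 * ee (- a) + (1 - \<i>) / 2 * ee a = complex_of_real (cos (2*pi*a) + sin (2*pi*a))"
  unfolding ee_def by (simp add: complex_eq_iff cis.sel field_simps)

lemma reindex_neg:
  fixes g :: "nat \<Rightarrow> complex" and N :: nat
  assumes "N > 0"
  shows "(\<Sum>k<N. g ((N - k) mod N)) = (\<Sum>k<N. g k)"
proof (rule sum.reindex_bij_witness[where i="\<lambda>k. (N - k) mod N" and j="\<lambda>k. (N - k) mod N"])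
  fix a assume "a \<in> {..<N}"
  then show "(N - (N - a) mod N) mod N = a" by (cases "a = 0") (auto simp: mod_if)
  show "(N - a) mod N \<in> {..<N}" using assms by simp
qed (use assms in \<open>auto simp: mod_if\<close>)

lemma hart_sum:
  fixes v :: "complex vec" and x n :: nat
  assumes "x < 2^n"
  shows "complex_of_real (1 / sqrt (2^n)) * (\<Sum>k<2^n. ee (of_int (-1) * real x * real k / 2^n) *
      ((1 + \<i>) / 2 * v $ k + (1 - \<i>) / 2 * v $ ((2^n - k) mod 2^n)))
    = (\<Sum>k<2^n. hartley (2^n) $$ (x,k) * v $ k)"
proof -
  define N :: nat where "N = 2^n"
  have N0: "N > 0" unfolding N_def by simp
  have RN: "(2::real)^n = real N" unfolding N_def by simp
  have xN: "x < N" using assms unfolding N_def .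
  have e1: "ee (of_int (-1) * real x * real ((N - k) mod N) / real N) = ee (real x * real k / real N)" if "k < N" for k
  proof (cases "k = 0")
    case True then show ?thesis by simp
  next
    case False
    then have "(N - k) mod N = N - k" using that by simp
    moreover have "of_int (-1) * real x * real (N - k) / real N = real x * real k / real N + of_int (- int x)"
      using that N0 by (simp add: of_nat_diff field_simps)
    ultimately show ?thesis by (simp only: ee_shift_int)
  qed
  have "(\<Sum>k<N. ee (of_int (-1) * real x * real k / real N) * v $ ((N - k) mod N))
      = (\<Sum>k<N. ee (of_int (-1) * real x * real ((N - k) mod N) / real N) * v $ ((N - (N - k) mod N) mod N))"
    using reindex_neg[OF N0, of "\<lambda>k. ee (of_int (-1) * real x * real k / real N) * v $ ((N - k) mod N)"] by simp
  also have "\<dots> = (\<Sum>k<N. ee (real x * real k / real N) * v $ k)"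
  proof (intro sum.cong refl)
    fix k assume "k \<in> {..<N}"
    then have k: "k < N" by simp
    have nn: "(N - (N - k) mod N) mod N = k" using k by (cases "k = 0") (auto simp: mod_if)
    show "ee (of_int (-1) * real x * real ((N - k) mod N) / real N) * v $ ((N - (N - k) mod N) mod N) =
        ee (real x * real k / real N) * v $ k" unfolding nn e1[OF k] ..
  qed
  finally have S: "(\<Sum>k<N. ee (of_int (-1) * real x * real k / real N) * v $ ((N - k) mod N)) =
      (\<Sum>k<N. ee (real x * real k / real N) * v $ k)" .
  have "complex_of_real (1 / sqrt (2^n)) * (\<Sum>k<2^n. ee (of_int (-1) * real x * real k / 2^n) *
      ((1 + \<i>) / 2 * v $ k + (1 - \<i>) / 2 * v $ ((2^n - k) mod 2^n)))
    = complex_of_real (1 / sqrt (real N)) * ((1 + \<i>) / 2 * (\<Sum>k<N. ee (of_int (-1) * real x * real k / real N) * v $ k) +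
       (1 - \<i>) / 2 * (\<Sum>k<N. ee (of_int (-1) * real x * real k / real N) * v $ ((N - k) mod N)))"
    unfolding RN N_def[symmetric] by (simp add: sum_distrib_left sum.distrib algebra_simps)
  also have "\<dots> = (\<Sum>k<N. complex_of_real (1 / sqrt (real N)) * ((1 + \<i>) / 2 * ee (- (real x * real k / real N)) +
       (1 - \<i>) / 2 * ee (real x * real k / real N)) * v $ k)"
    unfolding S by (simp add: sum_distrib_left sum.distrib algebra_simps)
  also have "\<dots> = (\<Sum>k<N. hartley N $$ (x,k) * v $ k)"
  proof (intro sum.cong refl)
    fix k assume "k \<in> {..<N}"
    then have k: "k < N" by simp
    have "2 * pi * (real x * real k / real N) = 2 * pi * real x * real k / real N" by simp
    then show "complex_of_real (1 / sqrt (real N)) * ((1 + \<i>) / 2 * ee (- (real x * real k / real N)) +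
       (1 - \<i>) / 2 * ee (real x * real k / real N)) * v $ k = hartley N $$ (x,k) * v $ k"
      unfolding coef_id hartley_def using k xN by (simp add: mult.assoc flip: of_real_mult)
  qed
  finally show ?thesis unfolding N_def .
qed


definition hart :: "nat \<Rightarrow> complex mat list" where
  "hart n = Mc n @ qft (Suc n) (-1) n"

lemma hart_apply:
  assumes v: "v \<in> carrier_vec (2^n)"
  shows "run (hart n) (embed (Suc n) v) = embed (Suc n) (hartley (2^n) *\<^sub>v v)"
proof -
  have dv: "dim_vec v = 2^n" using v by simp
  define st7 where "st7 = (\<lambda>x. if bit x n then 0 else
       (1 + \<i>) / 2 * v $ (x mod 2^n) + (1 - \<i>) / 2 * v $ ((2^n - x mod 2^n) mod (2^n::nat)))"
  have "run (hart n) (embed (Suc n) v) = run (qft (Suc n) (-1) n) (run (Mc n) (vec (2^Suc n) (\<lambda>x. if x < 2^n then v $ x else 0)))"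
    unfolding hart_def embed_def dv by simp
  also have "\<dots> = run (qft (Suc n) (-1) n) (vec (2^Suc n) st7)"
    unfolding Mc_apply st7_def ..
  also have "\<dots> = vec (2^Suc n) (QF (-1) n st7)"
    by (rule qft_apply) auto
  also have "\<dots> = embed (Suc n) (hartley (2^n) *\<^sub>v v)"
  proof (intro eq_vecI)
    fix x assume "x < dim_vec (embed (Suc n) (hartley (2^n) *\<^sub>v v))"
    then have x: "x < 2 * 2^n" by (simp add: embed_def)
    show "vec (2^Suc n) (QF (-1) n st7) $ x = embed (Suc n) (hartley (2^n) *\<^sub>v v) $ x"
    proof (cases "x < 2^n")
      case True
      have st: "st7 k = (1 + \<i>) / 2 * v $ k + (1 - \<i>) / 2 * v $ ((2^n - k) mod 2^n)" if "k < 2^n" for k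
        using low_facts[OF that] unfolding st7_def by simp
      have "QF (-1) n st7 x = complex_of_real (1 / sqrt (2^n)) * (\<Sum>k<2^n. ee (of_int (-1) * real x * real k / 2^n) *
          ((1 + \<i>) / 2 * v $ k + (1 - \<i>) / 2 * v $ ((2^n - k) mod 2^n)))"
        unfolding QF_def using True st by (intro arg_cong[where f="(*) _"] sum.cong) auto
      also have "\<dots> = (\<Sum>k<2^n. hartley (2^n) $$ (x,k) * v $ k)" by (rule hart_sum[OF True])
      also have "\<dots> = (hartley (2^n) *\<^sub>v v) $ x"
        using True dv by (simp add: hartley_def scalar_prod_def lessThan_atLeast0)
      finally show ?thesis using True x by (simp add: embed_def hartley_def)
    next
      case False
      have d2: "x div 2^n < 2" using x by (simp add: div_less_iff_less_mult mult.commute)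
      have d1: "0 < x div 2^n" using False by (simp add: div_greater_zero_iff)
      have "x div 2^n = 1" using d1 d2 by simp
      then have "st7 (x div 2^n * 2^n + k) = 0" if "k < 2^n" for k
        using low_facts[OF that] unfolding st7_def by simp
      then have "QF (-1) n st7 x = 0" unfolding QF_def by simp
      then show ?thesis using False x by (simp add: embed_def hartley_def)
    qed
  qed (simp add: embed_def)
  finally show ?thesis .
qed

abbreviation EG :: "nat \<Rightarrow> complex mat list \<Rightarrow> bool" where
  "EG m gs \<equiv> (\<forall>G\<in>set gs. elementary_gate m G)"

lemma elem_single: "q < m \<Longrightarrow> unitary2 U \<Longrightarrow> elementary_gate m (single_gate m (Suc q) U)"
  unfolding elementary_gate_def by (intro disjI2 exI[of _ "Suc q"] exI[of _ U]) auto

lemma elem_cnot: "p < m \<Longrightarrow> q < m \<Longrightarrow> p \<noteq> q \<Longrightarrow> elementary_gate m (cnot_gate m (Suc p) (Suc q))"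
  unfolding elementary_gate_def by (intro disjI1 exI[of _ "Suc p"] exI[of _ "Suc q"]) auto

lemma EG_swapg: "p < m \<Longrightarrow> q < m \<Longrightarrow> p \<noteq> q \<Longrightarrow> EG m (swapg m p q)"
  unfolding swapg_def by (auto intro: elem_cnot)

lemma EG_cph: "p < m \<Longrightarrow> q < m \<Longrightarrow> p \<noteq> q \<Longrightarrow> EG m (cph m \<theta> p q)"
  unfolding cph_def by (auto intro: elem_cnot elem_single unitary_rmat)

lemma EG_shiftc: "n < m \<Longrightarrow> EG m (shiftc m n)"
proof (induction n)
  case 0 then show ?case by simp
next
  case (Suc n) then show ?case using EG_swapg[of n m "Suc n"] by auto
qed

lemma EG_phs: assumes "k \<le> n" "n < m" shows "EG m (phs m s n k D)"
proof -
  have "EG m (cph m (2*pi*(of_int s * 2^b / D)) b n)" if "b < k" for b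
    using that assms by (intro EG_cph) auto
  then show ?thesis unfolding phs_def by auto
qed

lemma EG_qft: "n \<le> m \<Longrightarrow> EG m (qft m s n)"
proof (induction n)
  case 0 then show ?case by simp
next
  case (Suc n)
  then have n: "n < m" by simp
  show ?case using Suc EG_shiftc[OF n] EG_phs[OF order.refl n] elem_single[OF n unitary_hmat] by auto
qed

lemma EG_cnotsk: "k \<le> n \<Longrightarrow> n < m \<Longrightarrow> EG m (cnotsk m n k)"
  unfolding cnotsk_def by (auto intro: elem_cnot)

lemma EG_hart: "EG (Suc n) (hart n)"
proof -
  have q: "EG (Suc n) (qft (Suc n) s n)" for s using EG_qft[of n "Suc n" s] by simp
  have c: "EG (Suc n) (cP (Suc n) n)"
    unfolding cP_def cinc_def using q EG_cnotsk[OF order.refl lessI] EG_phs[OF order.refl lessI] by auto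
  have h: "elementary_gate (Suc n) (single_gate (Suc n) (Suc n) U)" if "unitary2 U" for U
    using elem_single[OF lessI that] .
  show ?thesis unfolding hart_def Mc_def using q c h unitary_hmat unitary_rmat by auto
qed

lemma len_shiftc: "length (shiftc m k) = 3 * k"
  by (induction k) (simp_all add: swapg_def)

lemma len_phs: "length (phs m s n k D) = 5 * k"
proof (induction k)
  case 0 then show ?case by (simp add: phs_def)
next
  case (Suc k)
  have "phs m s n (Suc k) D = phs m s n k D @ cph m (2*pi*(of_int s * 2^k / D)) k n"
    by (simp add: phs_def)
  then show ?case using Suc by (simp add: cph_def)
qed

lemma len_qft: "length (qft m s n) \<le> 4 * n^2"
proof (induction n)
  case 0 then show ?case by simp
next
  case (Suc n)
  have "length (qft m s (Suc n)) = 3 * n + length (qft m s n) + 5 * n + 1"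
    by (simp add: len_shiftc len_phs)
  also have "\<dots> \<le> 4 * (Suc n)^2" using Suc by (simp add: power2_eq_square)
  finally show ?case .
qed

lemma len_hart: "length (hart n) \<le> 5 + 12 * n + 20 * n^2"
proof -
  have q: "length (qft (Suc n) s n) \<le> 4 * n^2" for s by (rule len_qft)
  have c: "length (cP (Suc n) n) = 6 * n + length (qft (Suc n) 1 n) + length (qft (Suc n) (-1) n)"
    by (simp add: cP_def cinc_def cnotsk_def len_phs)
  have "length (hart n) = 5 + 2 * length (cP (Suc n) n) + length (qft (Suc n) (-1) n)"
    by (simp add: hart_def Mc_def)
  then show ?thesis using c q[of 1] q[of "-1"] by linarith
qed

lemma elem_carrier:
  assumes "elementary_gate m G" shows "G \<in> carrier_mat (2^m) (2^m)"
  using assms unfolding elementary_gate_def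
proof (elim disjE exE conjE)
  fix t U assume t: "1 \<le> t" "t \<le> m" and U: "unitary2 U" and G: "G = single_gate m t U"
  have "t = Suc (t - 1)" using t by simp
  then have "G = single_gate m (Suc (t - 1)) U" using G by simp
  moreover have "t - 1 < m" using t by simp
  moreover have "U \<in> carrier_mat 2 2" using U unfolding unitary2_def by simp
  ultimately show ?thesis using single_gate_carrier by simp
qed (simp add: cnot_carrier)

theorem mainTheorem7:
  "\<exists>(c::real) (K::nat). c > 0 \<and>
     (\<forall>n::nat. n \<ge> 1 \<longrightarrow>
        (\<exists>k \<le> K. \<exists>gs :: complex mat list.
           real (length gs) \<le> c * real n ^ 2 \<and>
           (\<forall>G \<in> set gs. elementary_gate (n + 1 + k) G) \<and>
           (\<forall>v \<in> carrier_vec (2 ^ n).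
              circuit_mat (n + 1 + k) gs *\<^sub>v embed (n + 1 + k) v
                = embed (n + 1 + k) (hartley (2 ^ n) *\<^sub>v v))))"
proof -
  have main: "\<exists>k\<le>0. \<exists>gs. real (length gs) \<le> 40 * real n ^ 2 \<and>
      (\<forall>G\<in>set gs. elementary_gate (n + 1 + k) G) \<and>
      (\<forall>v\<in>carrier_vec (2 ^ n). circuit_mat (n + 1 + k) gs *\<^sub>v embed (n + 1 + k) v = embed (n + 1 + k) (hartley (2 ^ n) *\<^sub>v v))"
    if n1: "n \<ge> 1" for n :: nat
  proof -
  have m: "n + 1 + 0 = Suc n" by simp
  show ?thesis
  proof (intro exI[of _ 0] conjI exI[of _ "hart n"] ballI)
    show "(0::nat) \<le> 0" by simp
    have "length (hart n) \<le> 5 + 12 * n + 20 * n^2" by (rule len_hart)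
    also have "\<dots> \<le> 40 * n^2"
    proof -
      have a: "n \<le> n^2" by (simp add: power2_eq_square le_square)
      have b: "1 \<le> n^2" using n1 a by linarith
      show ?thesis using a b by linarith
    qed
    finally have "real (length (hart n)) \<le> real (40 * n^2)" by linarith
    then show "real (length (hart n)) \<le> 40 * real n ^ 2" by simp
    fix G assume "G \<in> set (hart n)"
    then show "elementary_gate (n + 1 + 0) G" unfolding m using EG_hart by blast
  next
    fix v :: "complex vec" assume v: "v \<in> carrier_vec (2^n)"
    have C: "\<forall>G\<in>set (hart n). G \<in> carrier_mat (2^Suc n) (2^Suc n)" using EG_hart elem_carrier by blast
    have E: "embed (Suc n) v \<in> carrier_vec (2^Suc n)" by (simp add: embed_def)
    show "circuit_mat (n + 1 + 0) (hart n) *\<^sub>v embed (n + 1 + 0) v = embed (n + 1 + 0) (hartley (2 ^ n) *\<^sub>v v)"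
      unfolding m circuit_run[OF C E] hart_apply[OF v] ..
  qed
  qed
  show ?thesis
    apply (rule exI[of _ "40::real"], rule exI[of _ "0::nat"])
    using main by simp
qed

end
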